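(* Let $E$ be a real normed vector space, $C\subseteq E$ a nonempty closed convex set, $\phi\colon\mathbb{R}\to[0,+\infty]$ convex with $\phi(0)=0$, and $\psi\colon E\to(-\infty,+\infty]$ a $\phi$-convex function, real-valued on $C$ and $+\infty$ outside $C$. Assume $\partial\psi(C)=E^*$ or $C$ is compact; let $a\in C$, $a^\psi\in\partial\psi(a)$, with arbitrary predictions $\widehat{x}_t^*\in E^*$. (i) If $\theta_t=1$ for all $t$ (Optimistic Dual Averaging) and $\eta_1\geqslant\dots\geqslant\eta_{T+1}>0$, strategy S satisfies for all $z\in C$: \[\mathrm{Regret}(z,\dots,z)\leqslant\frac{1}{\eta_{T+1}}B_\psi(z,a^\psi)+\sum_{t=1}^T\frac{1}{\eta_t}\phi^\star\big(\eta_t\lVert x_t^*-\widehat{x}_t^*\rVert\big)-\sum_{t=1}^T\frac{1}{\eta_t}B_\psi\big(x_t,\widetilde{x}_t^\psi\big).\] (ii) If $\eta_t=1$ for all $t$ and $0<\theta_1\leqslant\dots\leqslant\theta_T$, strategy S satisfies for all $z\in C$: \[\mathrm{Regret}(z,\dots,z)\leqslant\frac{1}{\theta_1}B_\psi(z,a^\psi)+\sum_{t=1}^T\frac{1}{\theta_t}\phi^\star\big(\theta_t\lVert x_t^*-\widehat{x}_t^*\rVert\big)-\sum_{t=1}^T\frac{1}{\theta_t}B_\psi\big(x_t,\widetilde{x}_t^\psi\big).\]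
   Context: $E^*$ dual of $E$, $\langle\cdot,\cdot\rangle$ pairing, $\lVert\cdot\rVert$ norm/dual norm. $f^\star(x^* )=\sup_{x}(\langle x^*,x\rangle-f(x))$; $B_f(x,y^* )=f(x)+f^\star(y^* )-\langle y^*,x\rangle$; $\partial f(x)=\{x^*:B_f(x,x^* )=0\}$; $\partial f(C)=\bigcup_{x\in C}\partial f(x)$; $\partial\psi^\star(x^* ):=\arg\max_{x\in E}(\langle x^*,x\rangle-\psi(x))$. $\phi^\star$ is the Fenchel conjugate of $\phi$. $\psi$ is $\phi$-convex if $B_\psi(x,y^* )\geqslant\phi(\lVert x-y\rVert)$ for all $x\in E$ and all $y$, $y^*\in\partial\psi(y)$. Protocol: at rounds $t=1,\dots,T$ the learner chooses $x_t\in C$, the adversary reveals a proper $\varphi_t$ with $C\subseteq\operatorname{dom}\partial\varphi_t$, $x_t^*\in\partial\varphi_t(x_t)$; $\mathrm{Regret}(z_1,\dots,z_T)=\sum_t\varphi_t(x_t)-\sum_t\varphi_t(z_t)$. Strategy S with parameters $\eta_t,\theta_t>0$: $\widetilde{x}_t^\psi=a^\psi-\eta_t\sum_{i=1}^{t-1}\theta_ix_i^*$, $x_t\in\partial\psi^\star(\widetilde{x}_t^\psi-\eta_t\theta_t\widehat{x}_t^* )$. *)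

theory Defs
  imports "HOL-Analysis.Analysis"
begin

(* Extended-real valued functions on a real normed space E; the dual dual E^dual is
  the space of bounded linear functionals 'a \<Rightarrow>\<^sub>L real with the operator norm. *)

definition fconj :: "('a::real_normed_vector \<Rightarrow> ereal) \<Rightarrow> ('a \<Rightarrow>\<^sub>L real) \<Rightarrow> ereal" where
  "fconj f xs = (SUP x. ereal (blinfun_apply xs x) - f x)"

definition bregman :: "('a::real_normed_vector \<Rightarrow> ereal) \<Rightarrow> 'a \<Rightarrow> ('a \<Rightarrow>\<^sub>L real) \<Rightarrow> ereal" where
  "bregman f x ys = f x + fconj f ys - ereal (blinfun_apply ys x)"

definition subdiff :: "('a::real_normed_vector \<Rightarrow> ereal) \<Rightarrow> 'a \<Rightarrow> ('a \<Rightarrow>\<^sub>L real) set" where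
  "subdiff f x = {xs. bregman f x xs = 0}"

definition conj_subdiff :: "('a::real_normed_vector \<Rightarrow> ereal) \<Rightarrow> ('a \<Rightarrow>\<^sub>L real) \<Rightarrow> 'a set" where
  "conj_subdiff f xs = {x. \<forall>y. ereal (blinfun_apply xs y) - f y \<le> ereal (blinfun_apply xs x) - f x}"

definition proper_fun :: "('a \<Rightarrow> ereal) \<Rightarrow> bool" where
  "proper_fun f \<longleftrightarrow> (\<forall>x. f x \<noteq> -\<infinity>) \<and> (\<exists>x. f x \<noteq> \<infinity>)"

definition dom_subdiff :: "('a::real_normed_vector \<Rightarrow> ereal) \<Rightarrow> 'a set" where
  "dom_subdiff f = {x. subdiff f x \<noteq> {}}"

(* Convexity of an extended-valued function \<phi> : \<real> \<rightarrow> [0,+\<infinity>] (convention 0 \<cdot> \<infinity> = 0). *)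
definition ereal_convex :: "(real \<Rightarrow> ereal) \<Rightarrow> bool" where
  "ereal_convex \<phi> \<longleftrightarrow> (\<forall>x y u. 0 \<le> u \<and> u \<le> 1 \<longrightarrow>
      \<phi> ((1 - u) * x + u * y) \<le> ereal (1 - u) * \<phi> x + ereal u * \<phi> y)"

definition real_conj :: "(real \<Rightarrow> ereal) \<Rightarrow> real \<Rightarrow> ereal" where
  "real_conj \<phi> s = (SUP r. ereal (s * r) - \<phi> r)"

definition phi_convex :: "(real \<Rightarrow> ereal) \<Rightarrow> ('a::real_normed_vector \<Rightarrow> ereal) \<Rightarrow> bool" where
  "phi_convex \<phi> \<psi> \<longleftrightarrow> (\<forall>x y ys. ys \<in> subdiff \<psi> y \<longrightarrow> bregman \<psi> x ys \<ge> \<phi> (norm (x - y)))"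

definition xtil :: "('a::real_normed_vector \<Rightarrow>\<^sub>L real) \<Rightarrow> (nat \<Rightarrow> real) \<Rightarrow> (nat \<Rightarrow> real)
    \<Rightarrow> (nat \<Rightarrow> ('a \<Rightarrow>\<^sub>L real)) \<Rightarrow> nat \<Rightarrow> ('a \<Rightarrow>\<^sub>L real)" where
  "xtil a\<psi> \<eta> \<theta> xs t = a\<psi> - \<eta> t *\<^sub>R (\<Sum>i\<in>{1..<t}. \<theta> i *\<^sub>R xs i)"

end

theory Submission
  imports Defs
begin

lemma ereal_real_fin: "\<bar>e\<bar> \<noteq> \<infinity> \<Longrightarrow> e = ereal (real_of_ereal e)" by (cases e) auto

lemma fconj_ge: "ereal (blinfun_apply v y) - f y \<le> fconj f v"
  unfolding fconj_def by (rule SUP_upper) auto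

lemma fconj_le: "(\<And>y. ereal (blinfun_apply v y) - f y \<le> c) \<Longrightarrow> fconj f v \<le> c"
  unfolding fconj_def by (rule SUP_least) auto

lemma rconj_ge: "ereal (s * r) - \<phi> r \<le> real_conj \<phi> s"
  unfolding real_conj_def by (rule SUP_upper) auto

lemma breg_zero_fin:
  assumes "bregman f y v = 0" "\<bar>f y\<bar> \<noteq> \<infinity>"
  shows "\<bar>fconj f v\<bar> \<noteq> \<infinity>"
proof -
  obtain r where r: "f y = ereal r" using assms(2) by (cases "f y") auto
  have b: "ereal r + fconj f v - ereal (blinfun_apply v y) = 0"
    using assms(1) r unfolding bregman_def by simp
  show ?thesis
  proof (cases "fconj f v")
    case (real s) then show ?thesis by simp
  next
    case PInf then show ?thesis using b by simp
  next
    case MInf then show ?thesis using b by simp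
  qed
qed

lemma subdiff_fin:
  assumes "proper_fun f" "v \<in> subdiff f y"
  shows "\<bar>f y\<bar> \<noteq> \<infinity>" "\<bar>fconj f v\<bar> \<noteq> \<infinity>"
proof -
  obtain x0 where x0: "f x0 \<noteq> \<infinity>" using assms(1) unfolding proper_fun_def by blast
  have "f x0 \<noteq> -\<infinity>" using assms(1) unfolding proper_fun_def by blast
  with x0 obtain r where r: "f x0 = ereal r" by (cases "f x0") auto
  have "ereal (blinfun_apply v x0) - f x0 \<le> fconj f v" by (rule fconj_ge)
  then have nm: "fconj f v \<noteq> -\<infinity>" using r by auto
  have ny: "f y \<noteq> -\<infinity>" using assms(1) unfolding proper_fun_def by blast
  have b: "f y + fconj f v - ereal (blinfun_apply v y) = 0"
    using assms(2) unfolding subdiff_def bregman_def by simp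
  have 1: "f y \<noteq> \<infinity>"
  proof
    assume "f y = \<infinity>"
    then have "f y + fconj f v - ereal (blinfun_apply v y) = \<infinity>" using nm by simp
    then show False using b by simp
  qed
  then show "\<bar>f y\<bar> \<noteq> \<infinity>" using ny by (cases "f y") auto
  then show "\<bar>fconj f v\<bar> \<noteq> \<infinity>" using b breg_zero_fin[of f y v] unfolding bregman_def by simp
qed

lemma subgrad_ineq:
  assumes "proper_fun f" "v \<in> subdiff f y" "u \<in> subdiff f z"
  shows "real_of_ereal (f y) - real_of_ereal (f z) \<le> blinfun_apply v y - blinfun_apply v z"
proof -
  obtain a where a: "f y = ereal a" using subdiff_fin(1)[OF assms(1,2)] by (cases "f y") auto
  obtain b where b: "fconj f v = ereal b" using subdiff_fin(2)[OF assms(1,2)] by (cases "fconj f v") auto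
  obtain c where c: "f z = ereal c" using subdiff_fin(1)[OF assms(1,3)] by (cases "f z") auto
  have "f y + fconj f v - ereal (blinfun_apply v y) = 0"
    using assms(2) unfolding subdiff_def bregman_def by simp
  then have 1: "a + b - blinfun_apply v y = 0" using a b by simp
  have "ereal (blinfun_apply v z) - f z \<le> fconj f v" by (rule fconj_ge)
  then have "blinfun_apply v z - c \<le> b" using b c by simp
  then show ?thesis using a c 1 by simp
qed

lemma tele:
  fixes a Q :: "nat \<Rightarrow> real"
  assumes "\<forall>t\<in>{1..T}. a t > 0" "\<forall>t\<in>{1..<T}. a (Suc t) \<le> a t" "\<forall>t. Q t \<ge> 0" "T \<ge> 1"
  shows "(\<Sum>t\<in>{1..T}. a t * (Q t - Q (Suc t))) + a T * Q (Suc T) \<le> a 1 * Q 1"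
  using assms
proof (induction T)
  case 0 then show ?case by simp
next
  case (Suc T)
  show ?case
  proof (cases "T = 0")
    case True then show ?thesis by (simp add: algebra_simps)
  next
    case False
    have ih: "(\<Sum>t\<in>{1..T}. a t * (Q t - Q (Suc t))) + a T * Q (Suc T) \<le> a 1 * Q 1"
      using Suc False by auto
    have "a (Suc T) * Q (Suc T) \<le> a T * Q (Suc T)"
      using Suc.prems False by (intro mult_right_mono) auto
    then show ?thesis using ih by (simp add: algebra_simps)
  qed
qed

lemma rhs_reduce:
  fixes k :: "nat \<Rightarrow> real" and R Bt :: "nat \<Rightarrow> ereal"
  assumes "finite A" "\<forall>t\<in>A. k t > 0" "\<forall>t\<in>A. R t \<ge> 0"
    and "\<forall>t\<in>A. Bt t = ereal (b t)" and "Bz' = ereal Bz"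
    and "\<And>c. (\<forall>t\<in>A. R t = ereal (c t)) \<Longrightarrow> L \<le> k0 * Bz + (\<Sum>t\<in>A. k t * c t) - (\<Sum>t\<in>A. k t * b t)"
  shows "ereal L \<le> ereal k0 * Bz' + (\<Sum>t\<in>A. ereal (k t) * R t) - (\<Sum>t\<in>A. ereal (k t) * Bt t)"
proof -
  have "(\<Sum>t\<in>A. ereal (k t) * Bt t) = (\<Sum>t\<in>A. ereal (k t * b t))"
    by (rule sum.cong) (auto simp: assms(4))
  then have sB: "(\<Sum>t\<in>A. ereal (k t) * Bt t) = ereal (\<Sum>t\<in>A. k t * b t)" by simp
  show ?thesis
  proof (cases "\<exists>t\<in>A. R t = \<infinity>")
    case True
    then obtain t where t: "t \<in> A" "R t = \<infinity>" by blast
    have "k t > 0" using t assms(2) by blast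
    then have kt: "ereal (k t) * R t = \<infinity>" using t by simp
    have "(\<Sum>t\<in>A. ereal (k t) * R t) = \<infinity>"
      unfolding sum_Pinfty using assms(1) t(1) kt by (intro conjI bexI)
    then show ?thesis using sB assms(5) by simp
  next
    case False
    define c where "c t = real_of_ereal (R t)" for t
    have Rc: "\<forall>t\<in>A. R t = ereal (c t)"
    proof
      fix t assume t: "t \<in> A"
      then have "R t \<noteq> \<infinity>" "R t \<ge> 0" using False assms(3) by auto
      then show "R t = ereal (c t)" unfolding c_def by (cases "R t") auto
    qed
    have "(\<Sum>t\<in>A. ereal (k t) * R t) = (\<Sum>t\<in>A. ereal (k t * c t))"
      by (rule sum.cong) (auto simp: Rc)
    then have sR: "(\<Sum>t\<in>A. ereal (k t) * R t) = ereal (\<Sum>t\<in>A. k t * c t)" by simp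
    show ?thesis using assms(6)[OF Rc] sR sB assms(5) by simp
  qed
qed


theorem corollary3:
  fixes C :: "'a::real_normed_vector set"
    and \<phi> :: "real \<Rightarrow> ereal"
    and \<psi> :: "'a \<Rightarrow> ereal"
    and a :: 'a and a\<psi> :: "'a \<Rightarrow>\<^sub>L real"
    and T :: nat
    and \<eta> \<theta> :: "nat \<Rightarrow> real"
    and x :: "nat \<Rightarrow> 'a"
    and f :: "nat \<Rightarrow> 'a \<Rightarrow> ereal"
    and xs xh :: "nat \<Rightarrow> ('a \<Rightarrow>\<^sub>L real)"
  assumes C: "C \<noteq> {}" "closed C" "convex C"
    and phi: "ereal_convex \<phi>" "\<forall>r. \<phi> r \<ge> 0" "\<phi> 0 = 0"
    and psi: "phi_convex \<phi> \<psi>"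
      "\<forall>y\<in>C. \<bar>\<psi> y\<bar> \<noteq> \<infinity>" "\<forall>y. y \<notin> C \<longrightarrow> \<psi> y = \<infinity>"
    and surj_or_compact: "(\<Union>y\<in>C. subdiff \<psi> y) = UNIV \<or> compact C"
    and a: "a \<in> C" "a\<psi> \<in> subdiff \<psi> a"
    and learner: "\<forall>t\<in>{1..T}. x t \<in> C"
    and strategy: "\<forall>t\<in>{1..T}.
        x t \<in> conj_subdiff \<psi> (xtil a\<psi> \<eta> \<theta> xs t - (\<eta> t * \<theta> t) *\<^sub>R xh t)"
    and adversary: "\<forall>t\<in>{1..T}. proper_fun (f t) \<and> C \<subseteq> dom_subdiff (f t)
        \<and> xs t \<in> subdiff (f t) (x t)"
  shows
    "((\<forall>t\<in>{1..T}. \<theta> t = 1) \<and> (\<forall>t\<in>{1..T}. \<eta> (Suc t) \<le> \<eta> t) \<and> \<eta> (T + 1) > 0 \<longrightarrow>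
      (\<forall>z\<in>C. (\<Sum>t\<in>{1..T}. f t (x t)) - (\<Sum>t\<in>{1..T}. f t z)
        \<le> ereal (1 / \<eta> (T + 1)) * bregman \<psi> z a\<psi>
          + (\<Sum>t\<in>{1..T}. ereal (1 / \<eta> t) * real_conj \<phi> (\<eta> t * norm (xs t - xh t)))
          - (\<Sum>t\<in>{1..T}. ereal (1 / \<eta> t) * bregman \<psi> (x t) (xtil a\<psi> \<eta> \<theta> xs t))))
     \<and>
     ((\<forall>t\<in>{1..T}. \<eta> t = 1) \<and> 0 < \<theta> 1 \<and> (\<forall>t\<in>{1..<T}. \<theta> t \<le> \<theta> (Suc t)) \<longrightarrow>
      (\<forall>z\<in>C. (\<Sum>t\<in>{1..T}. f t (x t)) - (\<Sum>t\<in>{1..T}. f t z)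
        \<le> ereal (1 / \<theta> 1) * bregman \<psi> z a\<psi>
          + (\<Sum>t\<in>{1..T}. ereal (1 / \<theta> t) * real_conj \<phi> (\<theta> t * norm (xs t - xh t)))
          - (\<Sum>t\<in>{1..T}. ereal (1 / \<theta> t) * bregman \<psi> (x t) (xtil a\<psi> \<eta> \<theta> xs t))))"
proof -
  define ps where "ps y = real_of_ereal (\<psi> y)" for y
  have psE: "\<psi> y = ereal (ps y)" if y: "y \<in> C" for y
    unfolding ps_def by (rule ereal_real_fin) (rule bspec[OF psi(2) y])
  have psi_out: "\<And>y. y \<notin> C \<Longrightarrow> \<psi> y = \<infinity>" using psi(3) by blast
  have cjfa: "\<bar>fconj \<psi> a\<psi>\<bar> \<noteq> \<infinity>"
    using breg_zero_fin[of \<psi> a a\<psi>] a psi(2) unfolding subdiff_def by auto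
  have cbot: "fconj \<psi> v \<noteq> -\<infinity>" for v
  proof -
    have "ereal (blinfun_apply v a) - \<psi> a \<le> fconj \<psi> v" by (rule fconj_ge)
    then show ?thesis using psE[OF a(1)] by auto
  qed
  have ctop: "fconj \<psi> v \<noteq> \<infinity>" for v
    using surj_or_compact
  proof
    assume "(\<Union>y\<in>C. subdiff \<psi> y) = UNIV"
    then obtain y where y: "y \<in> C" "v \<in> subdiff \<psi> y" by blast
    then show ?thesis using breg_zero_fin[of \<psi> y v] psi(2) unfolding subdiff_def by auto
  next
    assume "compact C"
    then obtain M where M: "\<And>y. y \<in> C \<Longrightarrow> norm y \<le> M"
      using compact_imp_bounded bounded_iff by metis
    obtain b where b: "fconj \<psi> a\<psi> = ereal b" using cjfa by (cases "fconj \<psi> a\<psi>") auto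
    have "fconj \<psi> v \<le> ereal (norm (v - a\<psi>) * M + b)"
    proof (rule fconj_le)
      fix y
      show "ereal (blinfun_apply v y) - \<psi> y \<le> ereal (norm (v - a\<psi>) * M + b)"
      proof (cases "y \<in> C")
        case False then show ?thesis using psi_out by simp
      next
        case True
        have "ereal (blinfun_apply a\<psi> y) - \<psi> y \<le> fconj \<psi> a\<psi>" by (rule fconj_ge)
        then have 1: "blinfun_apply a\<psi> y - ps y \<le> b" using psE[OF True] b by simp
        have "blinfun_apply (v - a\<psi>) y \<le> norm (v - a\<psi>) * norm y"
          using norm_blinfun[of "v - a\<psi>" y] by simp
        also have "\<dots> \<le> norm (v - a\<psi>) * M" using M[OF True] by (simp add: mult_left_mono)
        finally have 2: "blinfun_apply v y - blinfun_apply a\<psi> y \<le> norm (v - a\<psi>) * M"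
          by (simp add: blinfun.bilinear_simps)
        show ?thesis using 1 2 psE[OF True] by simp
      qed
    qed
    then show ?thesis by auto
  qed
  define cj where "cj v = real_of_ereal (fconj \<psi> v)" for v
  have cjE: "fconj \<psi> v = ereal (cj v)" for v
    using cbot[of v] ctop[of v] unfolding cj_def by (cases "fconj \<psi> v") auto
  have cj_ge: "\<And>v y. y \<in> C \<Longrightarrow> blinfun_apply v y - ps y \<le> cj v"
  proof -
    fix v y assume y: "y \<in> C"
    have "ereal (blinfun_apply v y) - \<psi> y \<le> fconj \<psi> v" by (rule fconj_ge)
    then show "blinfun_apply v y - ps y \<le> cj v" using psE[OF y] cjE[of v] by simp
  qed
  have cj_le: "\<And>v c. (\<And>y. y \<in> C \<Longrightarrow> blinfun_apply v y - ps y \<le> c) \<Longrightarrow> cj v \<le> c"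
  proof -
    fix v c assume h: "\<And>y. y \<in> C \<Longrightarrow> blinfun_apply v y - ps y \<le> c"
    have "fconj \<psi> v \<le> ereal c"
    proof (rule fconj_le)
      fix y show "ereal (blinfun_apply v y) - \<psi> y \<le> ereal c"
      proof (cases "y \<in> C")
        case True then show ?thesis using h[OF True] psE[OF True] by simp
      next
        case False then show ?thesis using psi_out[OF False] by simp
      qed
    qed
    then show "cj v \<le> c" using cjE[of v] by simp
  qed
  have bregE: "\<And>y v. y \<in> C \<Longrightarrow> bregman \<psi> y v = ereal (ps y + cj v - blinfun_apply v y)"
    unfolding bregman_def using psE cjE by simp
  have key: "\<And>x (w::'a \<Rightarrow>\<^sub>L real) d c. x \<in> C \<Longrightarrow> cj w = blinfun_apply w x - ps x \<Longrightarrow> real_conj \<phi> (norm d) = ereal c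
      \<Longrightarrow> cj (w - d) \<le> blinfun_apply (w - d) x - ps x + c"
  proof -
    fix x :: 'a and w d :: "'a \<Rightarrow>\<^sub>L real" and c :: real
    assume x: "x \<in> C" and cw: "cj w = blinfun_apply w x - ps x" and rc: "real_conj \<phi> (norm d) = ereal c"
    have wsub: "w \<in> subdiff \<psi> x" using bregE[OF x, of w] cw unfolding subdiff_def by simp
    show "cj (w - d) \<le> blinfun_apply (w - d) x - ps x + c"
    proof (rule cj_le)
      fix y assume y: "y \<in> C"
      have "\<phi> (norm (y - x)) \<le> bregman \<psi> y w" using psi(1) wsub unfolding phi_convex_def by blast
      then have ph: "\<phi> (norm (y - x)) \<le> ereal (ps y + cj w - blinfun_apply w y)" using bregE[OF y] by simp
      have rr: "ereal (norm d * norm (y - x)) - \<phi> (norm (y - x)) \<le> ereal c"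
        using rconj_ge[of "norm d" "norm (y - x)" \<phi>] rc by simp
      have p0: "\<phi> (norm (y - x)) \<ge> 0" using phi(2) by blast
      obtain p where p: "\<phi> (norm (y - x)) = ereal p" using ph p0 by (cases "\<phi> (norm (y - x))") auto
      have p1: "p \<le> ps y + cj w - blinfun_apply w y" using ph p by simp
      have p2: "norm d * norm (y - x) - p \<le> c" using rr p by simp
      have "norm (blinfun_apply d (y - x)) \<le> norm d * norm (y - x)" by (rule norm_blinfun)
      then have p3: "- blinfun_apply d (y - x) \<le> norm d * norm (y - x)"
        by (metis abs_le_D2 real_norm_def)
      have e1: "blinfun_apply d (y - x) = blinfun_apply d y - blinfun_apply d x"
        by (simp add: blinfun.bilinear_simps)
      have e2: "blinfun_apply (w - d) y = blinfun_apply w y - blinfun_apply d y"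
        "blinfun_apply (w - d) x = blinfun_apply w x - blinfun_apply d x"
        by (simp_all add: blinfun.bilinear_simps)
      show "blinfun_apply (w - d) y - ps y \<le> blinfun_apply (w - d) x - ps x + c"
        using p1 p2 p3 cw e1 e2 by linarith
    qed
  qed
  have subx: "\<And>t w. t \<in> {1..T} \<Longrightarrow> x t \<in> conj_subdiff \<psi> w \<Longrightarrow> cj w = blinfun_apply w (x t) - ps (x t)"
  proof -
    fix t w assume t: "t \<in> {1..T}" and xw: "x t \<in> conj_subdiff \<psi> w"
    have xt: "x t \<in> C" using learner t by blast
    show "cj w = blinfun_apply w (x t) - ps (x t)"
    proof (rule antisym)
      show "cj w \<le> blinfun_apply w (x t) - ps (x t)"
      proof (rule cj_le)
        fix y assume y: "y \<in> C"
        have "ereal (blinfun_apply w y) - \<psi> y \<le> ereal (blinfun_apply w (x t)) - \<psi> (x t)"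
          using xw unfolding conj_subdiff_def by blast
        then show "blinfun_apply w y - ps y \<le> blinfun_apply w (x t) - ps (x t)"
          using psE[OF y] psE[OF xt] by simp
      qed
      show "blinfun_apply w (x t) - ps (x t) \<le> cj w" by (rule cj_ge[OF xt])
    qed
  qed
  have regret: "\<And>z. z \<in> C \<Longrightarrow> (\<Sum>t\<in>{1..T}. f t (x t)) - (\<Sum>t\<in>{1..T}. f t z)
      = ereal (\<Sum>t\<in>{1..T}. real_of_ereal (f t (x t)) - real_of_ereal (f t z))
      \<and> (\<Sum>t\<in>{1..T}. real_of_ereal (f t (x t)) - real_of_ereal (f t z))
          \<le> (\<Sum>t\<in>{1..T}. blinfun_apply (xs t) (x t) - blinfun_apply (xs t) z)"
  proof -
    fix z assume z: "z \<in> C"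
    have each: "f t (x t) = ereal (real_of_ereal (f t (x t))) \<and> f t z = ereal (real_of_ereal (f t z))
       \<and> real_of_ereal (f t (x t)) - real_of_ereal (f t z) \<le> blinfun_apply (xs t) (x t) - blinfun_apply (xs t) z"
      if t: "t \<in> {1..T}" for t
    proof -
      have pr: "proper_fun (f t)" and dm: "C \<subseteq> dom_subdiff (f t)" and sx: "xs t \<in> subdiff (f t) (x t)"
        using adversary t by blast+
      obtain u where u: "u \<in> subdiff (f t) z" using dm z unfolding dom_subdiff_def by blast
      show ?thesis
        using ereal_real_fin[OF subdiff_fin(1)[OF pr sx]] ereal_real_fin[OF subdiff_fin(1)[OF pr u]]
          subgrad_ineq[OF pr sx u] by (intro conjI)
    qed
    have s1: "(\<Sum>t\<in>{1..T}. f t (x t)) = ereal (\<Sum>t\<in>{1..T}. real_of_ereal (f t (x t)))"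
    proof -
      have "(\<Sum>t\<in>{1..T}. f t (x t)) = (\<Sum>t\<in>{1..T}. ereal (real_of_ereal (f t (x t))))"
        by (rule sum.cong[OF refl]) (meson each)
      then show ?thesis by simp
    qed
    have s2: "(\<Sum>t\<in>{1..T}. f t z) = ereal (\<Sum>t\<in>{1..T}. real_of_ereal (f t z))"
    proof -
      have "(\<Sum>t\<in>{1..T}. f t z) = (\<Sum>t\<in>{1..T}. ereal (real_of_ereal (f t z)))"
        by (rule sum.cong[OF refl]) (meson each)
      then show ?thesis by simp
    qed
    show "?thesis z"
    proof
      show "(\<Sum>t\<in>{1..T}. f t (x t)) - (\<Sum>t\<in>{1..T}. f t z)
        = ereal (\<Sum>t\<in>{1..T}. real_of_ereal (f t (x t)) - real_of_ereal (f t z))"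
        using s1 s2 by (simp add: sum_subtractf)
      show "(\<Sum>t\<in>{1..T}. real_of_ereal (f t (x t)) - real_of_ereal (f t z))
          \<le> (\<Sum>t\<in>{1..T}. blinfun_apply (xs t) (x t) - blinfun_apply (xs t) z)"
        by (rule sum_mono) (use each in blast)
    qed
  qed
  have rc0: "\<And>s. real_conj \<phi> s \<ge> 0"
  proof -
    fix s
    have "ereal (s * 0) - \<phi> 0 \<le> real_conj \<phi> s" by (rule rconj_ge)
    then show "real_conj \<phi> s \<ge> 0" using phi(3) by (simp add: zero_ereal_def)
  qed
  define G where "G t = (\<Sum>i\<in>{1..<t}. \<theta> i *\<^sub>R xs i)" for t
  have G1: "G 1 = 0" unfolding G_def by simp
  have GS: "\<And>t. 1 \<le> t \<Longrightarrow> G (Suc t) = G t + \<theta> t *\<^sub>R xs t"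
    unfolding G_def by (simp add: sum.atLeastLessThan_Suc)
  have xtilG: "\<And>t. xtil a\<psi> \<eta> \<theta> xs t = a\<psi> - \<eta> t *\<^sub>R G t" unfolding xtil_def G_def by simp
  have Gz: "\<And>z. blinfun_apply (G (Suc T)) z = (\<Sum>i\<in>{1..T}. \<theta> i * blinfun_apply (xs i) z)"
    unfolding G_def by (simp add: blinfun.bilinear_simps atLeastLessThanSuc_atLeastAtMost)
  have part1: "(\<forall>t\<in>{1..T}. \<theta> t = 1) \<and> (\<forall>t\<in>{1..T}. \<eta> (Suc t) \<le> \<eta> t) \<and> \<eta> (T + 1) > 0 \<longrightarrow>
      (\<forall>z\<in>C. (\<Sum>t\<in>{1..T}. f t (x t)) - (\<Sum>t\<in>{1..T}. f t z)
        \<le> ereal (1 / \<eta> (T + 1)) * bregman \<psi> z a\<psi>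
          + (\<Sum>t\<in>{1..T}. ereal (1 / \<eta> t) * real_conj \<phi> (\<eta> t * norm (xs t - xh t)))
          - (\<Sum>t\<in>{1..T}. ereal (1 / \<eta> t) * bregman \<psi> (x t) (xtil a\<psi> \<eta> \<theta> xs t)))"
  proof (intro impI ballI)
    fix z assume H: "(\<forall>t\<in>{1..T}. \<theta> t = 1) \<and> (\<forall>t\<in>{1..T}. \<eta> (Suc t) \<le> \<eta> t) \<and> \<eta> (T + 1) > 0"
      and z: "z \<in> C"
    have th1: "\<forall>t\<in>{1..T}. \<theta> t = 1" and edec: "\<forall>t\<in>{1..T}. \<eta> (Suc t) \<le> \<eta> t"
      and eT: "\<eta> (Suc T) > 0" using H by auto
    have ege: "\<eta> (Suc T) \<le> \<eta> (Suc T - n)" if "n \<le> T" for n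
      using that
    proof (induction n)
      case 0 then show ?case by simp
    next
      case (Suc n)
      have "T - n \<in> {1..T}" using Suc.prems by auto
      then have "\<eta> (Suc (T - n)) \<le> \<eta> (T - n)" using edec by blast
      moreover have "Suc (T - n) = Suc T - n" using Suc.prems by auto
      moreover have "Suc T - Suc n = T - n" by simp
      ultimately show ?case using Suc by auto
    qed
    have epos: "\<eta> t > 0" if "t \<in> {1..Suc T}" for t
    proof -
      have "\<eta> (Suc T) \<le> \<eta> (Suc T - (Suc T - t))" using ege[of "Suc T - t"] that by auto
      then show ?thesis using eT that by auto
    qed
    define h where "h t = (cj (a\<psi> - \<eta> t *\<^sub>R G t) - cj a\<psi>) / \<eta> t" for t
    have h1: "h 1 = 0" unfolding h_def G1 by simp
    have hmono: "(cj (a\<psi> - e' *\<^sub>R g) - cj a\<psi>) / e' \<le> (cj (a\<psi> - e *\<^sub>R g) - cj a\<psi>) / e"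
      if ee: "0 < e'" "e' \<le> e" for e e' :: real and g :: "'a \<Rightarrow>\<^sub>L real"
    proof -
      define l where "l = e' / e"
      have l: "0 < l" "l \<le> 1" "e' = l * e" using ee by (auto simp: l_def field_simps)
      have "cj (a\<psi> - e' *\<^sub>R g) \<le> (1 - l) * cj a\<psi> + l * cj (a\<psi> - e *\<^sub>R g)"
      proof (rule cj_le)
        fix y assume y: "y \<in> C"
        have 1: "blinfun_apply a\<psi> y - ps y \<le> cj a\<psi>" by (rule cj_ge[OF y])
        have 2: "blinfun_apply (a\<psi> - e *\<^sub>R g) y - ps y \<le> cj (a\<psi> - e *\<^sub>R g)" by (rule cj_ge[OF y])
        have eq: "blinfun_apply (a\<psi> - e' *\<^sub>R g) y - ps y
            = (1 - l) * (blinfun_apply a\<psi> y - ps y) + l * (blinfun_apply (a\<psi> - e *\<^sub>R g) y - ps y)"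
          using l(3) by (simp add: blinfun.bilinear_simps algebra_simps)
        have "(1 - l) * (blinfun_apply a\<psi> y - ps y) \<le> (1 - l) * cj a\<psi>"
          using 1 l by (intro mult_left_mono) auto
        moreover have "l * (blinfun_apply (a\<psi> - e *\<^sub>R g) y - ps y) \<le> l * cj (a\<psi> - e *\<^sub>R g)"
          using 2 l by (intro mult_left_mono) auto
        ultimately show "blinfun_apply (a\<psi> - e' *\<^sub>R g) y - ps y \<le> (1 - l) * cj a\<psi> + l * cj (a\<psi> - e *\<^sub>R g)"
          using eq by linarith
      qed
      then have X: "cj (a\<psi> - e' *\<^sub>R g) - cj a\<psi> \<le> l * (cj (a\<psi> - e *\<^sub>R g) - cj a\<psi>)"
        by (simp add: algebra_simps)
      have "(cj (a\<psi> - e' *\<^sub>R g) - cj a\<psi>) / e' \<le> (l * (cj (a\<psi> - e *\<^sub>R g) - cj a\<psi>)) / e'"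
        using X ee(1) by (intro divide_right_mono) auto
      also have "\<dots> = (cj (a\<psi> - e *\<^sub>R g) - cj a\<psi>) / e"
      proof -
        have e0: "e \<noteq> 0" "l \<noteq> 0" using ee l by auto
        show ?thesis unfolding l(3) using e0 by simp
      qed
      finally show ?thesis .
    qed
    define B where "B t = ps (x t) + cj (xtil a\<psi> \<eta> \<theta> xs t) - blinfun_apply (xtil a\<psi> \<eta> \<theta> xs t) (x t)" for t
    define Q1 where "Q1 = ps z + cj a\<psi> - blinfun_apply a\<psi> z"
    define L where "L = (\<Sum>t\<in>{1..T}. real_of_ereal (f t (x t)) - real_of_ereal (f t z))"
    have r1: "(\<Sum>t\<in>{1..T}. f t (x t)) - (\<Sum>t\<in>{1..T}. f t z) = ereal L"
      and r2: "L \<le> (\<Sum>t\<in>{1..T}. blinfun_apply (xs t) (x t) - blinfun_apply (xs t) z)"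
      using regret[OF z] unfolding L_def by auto
    have "ereal L \<le> ereal (1 / \<eta> (T + 1)) * bregman \<psi> z a\<psi>
          + (\<Sum>t\<in>{1..T}. ereal (1 / \<eta> t) * real_conj \<phi> (\<eta> t * norm (xs t - xh t)))
          - (\<Sum>t\<in>{1..T}. ereal (1 / \<eta> t) * bregman \<psi> (x t) (xtil a\<psi> \<eta> \<theta> xs t))"
      apply (rule rhs_reduce[where b=B and Bz=Q1])
      subgoal by simp
      subgoal using epos by auto
      subgoal using rc0 by blast
      subgoal using bregE learner by (auto simp: B_def)
      subgoal using bregE[OF z] by (simp add: Q1_def)
      subgoal for c
      proof -
        assume c: "\<forall>t\<in>{1..T}. real_conj \<phi> (\<eta> t * norm (xs t - xh t)) = ereal (c t)"
        have step: "blinfun_apply (xs t) (x t) + (h (Suc t) - h t) \<le> 1 / \<eta> t * c t - 1 / \<eta> t * B t"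
          if t: "t \<in> {1..T}" for t
        proof -
          have et: "\<eta> t > 0" using epos t by auto
          have et1: "\<eta> (Suc t) > 0" using epos t by auto
          have ed: "\<eta> (Suc t) \<le> \<eta> t" using edec t by blast
          have th: "\<theta> t = 1" using th1 t by blast
          have xt: "x t \<in> C" using learner t by blast
          define u where "u = a\<psi> - \<eta> t *\<^sub>R G t"
          have xu: "xtil a\<psi> \<eta> \<theta> xs t = u" by (simp add: xtilG u_def)
          define w where "w = u - \<eta> t *\<^sub>R xh t"
          have "x t \<in> conj_subdiff \<psi> (xtil a\<psi> \<eta> \<theta> xs t - (\<eta> t * \<theta> t) *\<^sub>R xh t)"
            using strategy t by blast
          then have "x t \<in> conj_subdiff \<psi> w" using th xu unfolding w_def by simp
          then have cw: "cj w = blinfun_apply w (x t) - ps (x t)" by (rule subx[OF t])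
          define d where "d = \<eta> t *\<^sub>R (xs t - xh t)"
          have nd: "norm d = \<eta> t * norm (xs t - xh t)" using et by (simp add: d_def)
          have wd: "w - d = a\<psi> - \<eta> t *\<^sub>R G (Suc t)"
            using GS[of t] t th by (simp add: w_def u_def d_def algebra_simps scaleR_diff_right scaleR_add_right)
          have rc: "real_conj \<phi> (norm d) = ereal (c t)" using c t nd by simp
          have k: "cj (w - d) \<le> blinfun_apply (w - d) (x t) - ps (x t) + c t" by (rule key[OF xt cw rc])
          have hs: "h (Suc t) \<le> (cj (a\<psi> - \<eta> t *\<^sub>R G (Suc t)) - cj a\<psi>) / \<eta> t"
            unfolding h_def by (rule hmono[OF et1 ed])
          then have hs': "h (Suc t) \<le> (cj (w - d) - cj a\<psi>) / \<eta> t" using wd by simp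
          have ev: "blinfun_apply (w - d) (x t) = blinfun_apply u (x t) - \<eta> t * blinfun_apply (xs t) (x t)"
            unfolding wd u_def using GS[of t] t th by (simp add: blinfun.bilinear_simps algebra_simps)
          have ht: "h t = (cj u - cj a\<psi>) / \<eta> t" by (simp add: h_def u_def)
          have Bt: "B t = ps (x t) + cj u - blinfun_apply u (x t)" by (simp add: B_def xu)
          have main: "\<eta> t * blinfun_apply (xs t) (x t) + (cj (w - d) - cj a\<psi>) - (cj u - cj a\<psi>) \<le> c t - B t"
            using k ev Bt by linarith
          have "blinfun_apply (xs t) (x t) + (cj (w - d) - cj a\<psi>) / \<eta> t - h t
              = (\<eta> t * blinfun_apply (xs t) (x t) + (cj (w - d) - cj a\<psi>) - (cj u - cj a\<psi>)) / \<eta> t"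
            using et ht by (simp add: field_simps)
          also have "\<dots> \<le> (c t - B t) / \<eta> t" using main et by (intro divide_right_mono) auto
          also have "\<dots> = 1 / \<eta> t * c t - 1 / \<eta> t * B t" by (simp add: diff_divide_distrib)
          finally have calc: "blinfun_apply (xs t) (x t) + (cj (w - d) - cj a\<psi>) / \<eta> t - h t
              \<le> 1 / \<eta> t * c t - 1 / \<eta> t * B t" .
          show ?thesis using calc hs' by linarith
        qed
        have S: "(\<Sum>t\<in>{1..T}. blinfun_apply (xs t) (x t) + (h (Suc t) - h t))
            \<le> (\<Sum>t\<in>{1..T}. 1 / \<eta> t * c t - 1 / \<eta> t * B t)"
          by (rule sum_mono) (rule step)
        have tel: "(\<Sum>t\<in>{1..T}. h (Suc t) - h t) = h (Suc T) - h 1" by (rule sum_Suc_diff) simp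
        have S1: "(\<Sum>t\<in>{1..T}. blinfun_apply (xs t) (x t)) + (h (Suc T) - h 1)
            \<le> (\<Sum>t\<in>{1..T}. 1 / \<eta> t * c t) - (\<Sum>t\<in>{1..T}. 1 / \<eta> t * B t)"
          using S tel by (simp add: sum.distrib sum_subtractf)
        have hT: "- blinfun_apply (G (Suc T)) z - Q1 / \<eta> (Suc T) \<le> h (Suc T)"
        proof -
          have "blinfun_apply (a\<psi> - \<eta> (Suc T) *\<^sub>R G (Suc T)) z - ps z \<le> cj (a\<psi> - \<eta> (Suc T) *\<^sub>R G (Suc T))"
            by (rule cj_ge[OF z])
          then have "(blinfun_apply a\<psi> z - \<eta> (Suc T) * blinfun_apply (G (Suc T)) z - ps z - cj a\<psi>) / \<eta> (Suc T) \<le> h (Suc T)"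
            unfolding h_def using eT by (intro divide_right_mono) (auto simp: blinfun.bilinear_simps)
          moreover have "(blinfun_apply a\<psi> z - \<eta> (Suc T) * blinfun_apply (G (Suc T)) z - ps z - cj a\<psi>) / \<eta> (Suc T)
              = - blinfun_apply (G (Suc T)) z - Q1 / \<eta> (Suc T)"
            using eT by (simp add: Q1_def field_simps)
          ultimately show ?thesis by simp
        qed
        have Gz1: "blinfun_apply (G (Suc T)) z = (\<Sum>t\<in>{1..T}. blinfun_apply (xs t) z)"
          using Gz[of z] th1 by simp
        have r3: "L \<le> (\<Sum>t\<in>{1..T}. blinfun_apply (xs t) (x t)) - (\<Sum>t\<in>{1..T}. blinfun_apply (xs t) z)"
          using r2 by (simp add: sum_subtractf)
        have q: "1 / \<eta> (T + 1) * Q1 = Q1 / \<eta> (Suc T)" by simp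
        show ?thesis using r3 S1 hT Gz1 h1 q by linarith
      qed
      done
    then show "(\<Sum>t\<in>{1..T}. f t (x t)) - (\<Sum>t\<in>{1..T}. f t z)
        \<le> ereal (1 / \<eta> (T + 1)) * bregman \<psi> z a\<psi>
          + (\<Sum>t\<in>{1..T}. ereal (1 / \<eta> t) * real_conj \<phi> (\<eta> t * norm (xs t - xh t)))
          - (\<Sum>t\<in>{1..T}. ereal (1 / \<eta> t) * bregman \<psi> (x t) (xtil a\<psi> \<eta> \<theta> xs t))"
      using r1 by simp
  qed
  have part2: "(\<forall>t\<in>{1..T}. \<eta> t = 1) \<and> 0 < \<theta> 1 \<and> (\<forall>t\<in>{1..<T}. \<theta> t \<le> \<theta> (Suc t)) \<longrightarrow>
      (\<forall>z\<in>C. (\<Sum>t\<in>{1..T}. f t (x t)) - (\<Sum>t\<in>{1..T}. f t z)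
        \<le> ereal (1 / \<theta> 1) * bregman \<psi> z a\<psi>
          + (\<Sum>t\<in>{1..T}. ereal (1 / \<theta> t) * real_conj \<phi> (\<theta> t * norm (xs t - xh t)))
          - (\<Sum>t\<in>{1..T}. ereal (1 / \<theta> t) * bregman \<psi> (x t) (xtil a\<psi> \<eta> \<theta> xs t)))"
  proof (intro impI ballI)
    fix z assume H: "(\<forall>t\<in>{1..T}. \<eta> t = 1) \<and> 0 < \<theta> 1 \<and> (\<forall>t\<in>{1..<T}. \<theta> t \<le> \<theta> (Suc t))"
      and z: "z \<in> C"
    have e1: "\<forall>t\<in>{1..T}. \<eta> t = 1" and th0: "0 < \<theta> 1"
      and thmo: "\<forall>t\<in>{1..<T}. \<theta> t \<le> \<theta> (Suc t)" using H by auto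
    have thge: "\<theta> 1 \<le> \<theta> t" if "1 \<le> t" "t \<le> T" for t
      using that
    proof (induction t)
      case 0 then show ?case by simp
    next
      case (Suc t)
      show ?case
      proof (cases "t = 0")
        case True then show ?thesis by simp
      next
        case False
        then have "\<theta> 1 \<le> \<theta> t" using Suc by auto
        moreover have "\<theta> t \<le> \<theta> (Suc t)" using thmo Suc.prems False by auto
        ultimately show ?thesis by simp
      qed
    qed
    have thpos: "\<theta> t > 0" if "t \<in> {1..T}" for t using thge[of t] that th0 by auto
    define u where "u t = a\<psi> - G t" for t
    define Q where "Q t = ps z + cj (u t) - blinfun_apply (u t) z" for t
    have Q0: "\<forall>t. Q t \<ge> 0"
    proof
      fix t show "Q t \<ge> 0" using cj_ge[OF z, of "u t"] by (simp add: Q_def)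
    qed
    have u1: "u 1 = a\<psi>" unfolding u_def G1 by simp
    define B where "B t = ps (x t) + cj (xtil a\<psi> \<eta> \<theta> xs t) - blinfun_apply (xtil a\<psi> \<eta> \<theta> xs t) (x t)" for t
    define L where "L = (\<Sum>t\<in>{1..T}. real_of_ereal (f t (x t)) - real_of_ereal (f t z))"
    have r1: "(\<Sum>t\<in>{1..T}. f t (x t)) - (\<Sum>t\<in>{1..T}. f t z) = ereal L"
      and r2: "L \<le> (\<Sum>t\<in>{1..T}. blinfun_apply (xs t) (x t) - blinfun_apply (xs t) z)"
      using regret[OF z] unfolding L_def by auto
    have "ereal L \<le> ereal (1 / \<theta> 1) * bregman \<psi> z a\<psi>
          + (\<Sum>t\<in>{1..T}. ereal (1 / \<theta> t) * real_conj \<phi> (\<theta> t * norm (xs t - xh t)))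
          - (\<Sum>t\<in>{1..T}. ereal (1 / \<theta> t) * bregman \<psi> (x t) (xtil a\<psi> \<eta> \<theta> xs t))"
      apply (rule rhs_reduce[where b=B and Bz="Q 1"])
      subgoal by simp
      subgoal using thpos by auto
      subgoal using rc0 by blast
      subgoal using bregE learner by (auto simp: B_def)
      subgoal using bregE[OF z] u1 by (simp add: Q_def)
      subgoal for c
      proof -
        assume c: "\<forall>t\<in>{1..T}. real_conj \<phi> (\<theta> t * norm (xs t - xh t)) = ereal (c t)"
        have step: "blinfun_apply (xs t) (x t) - blinfun_apply (xs t) z
            \<le> (1 / \<theta> t * c t - 1 / \<theta> t * B t) + 1 / \<theta> t * (Q t - Q (Suc t))"
          if t: "t \<in> {1..T}" for t
        proof -
          have tp: "\<theta> t > 0" using thpos t by auto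
          have et: "\<eta> t = 1" using e1 t by blast
          have xt: "x t \<in> C" using learner t by blast
          have xu: "xtil a\<psi> \<eta> \<theta> xs t = u t" by (simp add: xtilG u_def et)
          define w where "w = u t - \<theta> t *\<^sub>R xh t"
          have "x t \<in> conj_subdiff \<psi> (xtil a\<psi> \<eta> \<theta> xs t - (\<eta> t * \<theta> t) *\<^sub>R xh t)"
            using strategy t by blast
          then have "x t \<in> conj_subdiff \<psi> w" using et xu unfolding w_def by simp
          then have cw: "cj w = blinfun_apply w (x t) - ps (x t)" by (rule subx[OF t])
          define d where "d = \<theta> t *\<^sub>R (xs t - xh t)"
          have nd: "norm d = \<theta> t * norm (xs t - xh t)" using tp by (simp add: d_def)
          have wd: "w - d = u (Suc t)"
            using GS[of t] t by (simp add: w_def u_def d_def algebra_simps scaleR_diff_right scaleR_add_right)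
          have rc: "real_conj \<phi> (norm d) = ereal (c t)" using c t nd by simp
          have k: "cj (w - d) \<le> blinfun_apply (w - d) (x t) - ps (x t) + c t" by (rule key[OF xt cw rc])
          have ev: "\<And>y. blinfun_apply (u (Suc t)) y = blinfun_apply (u t) y - \<theta> t * blinfun_apply (xs t) y"
            unfolding u_def using GS[of t] t by (simp add: blinfun.bilinear_simps algebra_simps)
          have Bt: "B t = ps (x t) + cj (u t) - blinfun_apply (u t) (x t)" by (simp add: B_def xu)
          have main: "\<theta> t * (blinfun_apply (xs t) (x t) - blinfun_apply (xs t) z) \<le> c t - B t + (Q t - Q (Suc t))"
            using k ev[of "x t"] ev[of z] Bt wd unfolding Q_def by (simp add: algebra_simps)
          have "blinfun_apply (xs t) (x t) - blinfun_apply (xs t) z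
              = (\<theta> t * (blinfun_apply (xs t) (x t) - blinfun_apply (xs t) z)) / \<theta> t"
            using tp by simp
          also have "\<dots> \<le> (c t - B t + (Q t - Q (Suc t))) / \<theta> t" using main tp by (intro divide_right_mono) auto
          also have "\<dots> = (1 / \<theta> t * c t - 1 / \<theta> t * B t) + 1 / \<theta> t * (Q t - Q (Suc t))"
            by (simp add: diff_divide_distrib add_divide_distrib)
          finally show ?thesis .
        qed
        have S: "(\<Sum>t\<in>{1..T}. blinfun_apply (xs t) (x t) - blinfun_apply (xs t) z)
            \<le> (\<Sum>t\<in>{1..T}. (1 / \<theta> t * c t - 1 / \<theta> t * B t) + 1 / \<theta> t * (Q t - Q (Suc t)))"
          by (rule sum_mono) (rule step)
        have S1: "(\<Sum>t\<in>{1..T}. (1 / \<theta> t * c t - 1 / \<theta> t * B t) + 1 / \<theta> t * (Q t - Q (Suc t)))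
            = (\<Sum>t\<in>{1..T}. 1 / \<theta> t * c t) - (\<Sum>t\<in>{1..T}. 1 / \<theta> t * B t)
              + (\<Sum>t\<in>{1..T}. 1 / \<theta> t * (Q t - Q (Suc t)))"
          by (simp add: sum.distrib sum_subtractf)
        have TQ: "(\<Sum>t\<in>{1..T}. 1 / \<theta> t * (Q t - Q (Suc t))) \<le> 1 / \<theta> 1 * Q 1"
        proof (cases "T = 0")
          case True then show ?thesis using Q0 th0 by simp
        next
          case False
          have a1: "\<forall>t\<in>{1..T}. 1 / \<theta> t > 0" using thpos by auto
          have a2: "\<forall>t\<in>{1..<T}. 1 / \<theta> (Suc t) \<le> 1 / \<theta> t"
          proof
            fix t assume t: "t \<in> {1..<T}"
            have "\<theta> t > 0" using thpos t by auto
            moreover have "\<theta> t \<le> \<theta> (Suc t)" using thmo t by blast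
            ultimately show "1 / \<theta> (Suc t) \<le> 1 / \<theta> t" by (simp add: frac_le)
          qed
          have "(\<Sum>t\<in>{1..T}. 1 / \<theta> t * (Q t - Q (Suc t))) + 1 / \<theta> T * Q (Suc T) \<le> 1 / \<theta> 1 * Q 1"
            using tele[of T "\<lambda>t. 1 / \<theta> t" Q] a1 a2 Q0 False by auto
          moreover have "1 / \<theta> T * Q (Suc T) \<ge> 0" using Q0 thpos[of T] False by auto
          ultimately show ?thesis by linarith
        qed
        have r3: "L \<le> (\<Sum>t\<in>{1..T}. blinfun_apply (xs t) (x t) - blinfun_apply (xs t) z)" by (rule r2)
        show ?thesis using r3 S S1 TQ by linarith
      qed
      done
    then show "(\<Sum>t\<in>{1..T}. f t (x t)) - (\<Sum>t\<in>{1..T}. f t z)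
        \<le> ereal (1 / \<theta> 1) * bregman \<psi> z a\<psi>
          + (\<Sum>t\<in>{1..T}. ereal (1 / \<theta> t) * real_conj \<phi> (\<theta> t * norm (xs t - xh t)))
          - (\<Sum>t\<in>{1..T}. ereal (1 / \<theta> t) * bregman \<psi> (x t) (xtil a\<psi> \<eta> \<theta> xs t))"
      using r1 by simp
  qed
  show ?thesis using part1 part2 by blast

qed

end
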